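(* Let $\gamma_1,\dots,\gamma_r>0$, and let $\mu:[0,\infty)\to\mathbb{R}$ be Lipschitz continuous with $\mu(t)\ge0$ for all $t\ge0$. Let $\varphi(t)$ solve $\dot\varphi=A_\gamma\varphi+B\mu(t)$ and set $\Delta\varphi(t)=\varphi(t)-\Gamma\mu(t)$. Then $\Delta\varphi(\cdot)$ stays bounded on $[0,\infty)$.
   Context: $A_\gamma$ is the $r\times r$ matrix with diagonal entries $-\gamma_1,\dots,-\gamma_r$, entries $1$ on the superdiagonal, and zeros elsewhere; $B=[0,\dots,0,1]^\top\in\mathbb{R}^r$; $\Gamma=-A_\gamma^{-1}B=[(\gamma_1\cdots\gamma_r)^{-1},(\gamma_2\cdots\gamma_r)^{-1},\dots,\gamma_r^{-1}]^\top$. *)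

theory Defs
  imports "HOL-Analysis.Analysis"
begin

text \<open>Vectors in R^r are represented as functions nat => real, with components
indexed 0,...,r-1 (index i here corresponds to index i+1 in the paper).\<close>

definition A_gamma :: "nat \<Rightarrow> (nat \<Rightarrow> real) \<Rightarrow> nat \<Rightarrow> nat \<Rightarrow> real" where
  "A_gamma r \<gamma> i j = (if i = j then - \<gamma> i else if j = Suc i then 1 else 0)"

definition B_vec :: "nat \<Rightarrow> nat \<Rightarrow> real" where
  "B_vec r i = (if i = r - 1 then 1 else 0)"

definition Gamma_vec :: "nat \<Rightarrow> (nat \<Rightarrow> real) \<Rightarrow> nat \<Rightarrow> real" where
  "Gamma_vec r \<gamma> i = 1 / (\<Prod>j\<in>{i..<r}. \<gamma> j)"

end

theory Submission
  imports Defs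
begin

lemma upper_bound_aux:
  fixes x g h :: "real \<Rightarrow> real" and \<gamma> L H :: real
  assumes gp: "\<gamma> > 0"
    and lipg: "L-lipschitz_on {0..} g"
    and hb: "\<And>t. t \<ge> 0 \<Longrightarrow> h t \<le> H"
    and der: "\<And>t. t \<ge> 0 \<Longrightarrow> (x has_real_derivative (-\<gamma> * x t + g t + h t)) (at t within {0..})"
  shows "\<exists>C. \<forall>t\<ge>0. x t - g t / \<gamma> \<le> C"
proof -
  define u where "u t = x t - g t / \<gamma>" for t
  define C0 where "C0 = (H + L / \<gamma>) / \<gamma>"
  define K where "K = max (u 0) (C0 + 1)"
  have L0: "L \<ge> 0" using lipg by (auto simp: lipschitz_on_def)
  have gl: "\<bar>g s - g t\<bar> \<le> L * \<bar>s - t\<bar>" if "s \<ge> 0" "t \<ge> 0" for s t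
    using lipschitz_onD[OF lipg, of s t] that by (simp add: dist_real_def)
  have contg: "continuous_on {0..} g" using lipg by (rule lipschitz_on_continuous_on)
  have contx: "continuous_on {0..} x"
    unfolding continuous_on_eq_continuous_within
    using der DERIV_continuous by fastforce
  have contu: "continuous_on {0..} u"
    unfolding u_def by (intro continuous_intros contx contg) (use gp in auto)
  have descent: "\<forall>\<^sub>F s in at_right t. u s < u t" if t0: "t \<ge> 0" and ut: "u t > C0" for t
  proof -
    define D where "D = -\<gamma> * x t + g t + h t"
    define \<delta> where "\<delta> = (\<gamma> * u t - H - L / \<gamma>) / 2"
    have "\<gamma> * u t > H + L / \<gamma>" using ut gp unfolding C0_def by (simp add: field_simps)
    hence dpos: "\<delta> > 0" unfolding \<delta>_def by simp
    have "(x has_real_derivative D) (at_right t)"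
      using DERIV_subset[OF der[OF t0], of "{t<..}"] t0 unfolding D_def by fastforce
    hence "((\<lambda>y. (x y - x t) / (y - t)) \<longlongrightarrow> D) (at_right t)"
      by (simp add: has_field_derivative_iff)
    hence ev1: "\<forall>\<^sub>F s in at_right t. (x s - x t) / (s - t) < D + \<delta>"
      using dpos by (intro order_tendstoD) auto
    have ev2: "\<forall>\<^sub>F s in at_right t. s > t" by (simp add: eventually_at_right_less)
    show ?thesis using ev1 ev2
    proof eventually_elim
      case (elim s)
      have st: "s - t > 0" using elim by simp
      have "x s - x t < (D + \<delta>) * (s - t)" using elim st by (simp add: field_simps)
      moreover have "g t - g s \<le> L * (s - t)" using gl[of s t] elim t0 by auto
      hence "(g t - g s) / \<gamma> \<le> L / \<gamma> * (s - t)" using gp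
        by (metis divide_right_mono less_eq_real_def times_divide_eq_left mult.commute)
      moreover have "D \<le> -\<gamma> * u t + H" using hb[OF t0] gp unfolding D_def u_def by (simp add: field_simps)
      moreover have "(D + \<delta>) * (s - t) \<le> (-\<gamma> * u t + H + \<delta>) * (s - t)"
        using \<open>D \<le> -\<gamma> * u t + H\<close> st by (intro mult_right_mono) auto
      moreover have "u s - u t = (x s - x t) + (g t - g s) / \<gamma>"
        unfolding u_def by (simp add: diff_divide_distrib)
      moreover have "(-\<gamma> * u t + H + \<delta> + L/\<gamma>) * (s - t) = (-\<gamma> * u t + H + \<delta>) * (s - t) + L / \<gamma> * (s - t)"
        by (simp add: distrib_right)
      ultimately have "u s - u t < (-\<gamma> * u t + H + \<delta> + L/\<gamma>) * (s - t)"
        by linarith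
      also have "-\<gamma> * u t + H + \<delta> + L/\<gamma> = -\<delta>" unfolding \<delta>_def by (simp add: field_simps)
      finally have "u s - u t < - \<delta> * (s - t)" .
      moreover have "\<delta> * (s - t) > 0" using dpos st by simp
      ultimately show ?case by linarith
    qed
  qed
  have "u T \<le> K" if T0: "T \<ge> 0" for T
  proof (rule ccontr)
    assume nT: "\<not> u T \<le> K"
    define A where "A = {0..T} \<inter> u -` {..K}"
    have clA: "closed A" unfolding A_def
      by (intro continuous_closed_preimage continuous_on_subset[OF contu]) auto
    have "0 \<in> A" using T0 unfolding A_def K_def by auto
    hence neA: "A \<noteq> {}" by auto
    have bdA: "bdd_above A" unfolding A_def by (auto intro: bdd_aboveI[of _ T])
    define s where "s = Sup A"
    have sA: "s \<in> A" unfolding s_def using closed_contains_Sup[OF neA bdA clA] .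
    hence s0: "s \<ge> 0" and sT: "s \<le> T" and usK: "u s \<le> K" unfolding A_def by auto
    have sT': "s < T" using sT usK nT by (cases "s = T") auto
    have above: "u y > K" if "s < y" "y \<le> T" for y
    proof (rule ccontr)
      assume "\<not> u y > K"
      hence "y \<in> A" using that s0 unfolding A_def by auto
      hence "y \<le> s" unfolding s_def using bdA by (rule cSup_upper)
      thus False using that by simp
    qed
    have evK: "\<forall>\<^sub>F y in at_right s. u y \<le> K"
    proof (cases "u s < K")
      case True
      have "(u \<longlongrightarrow> u s) (at s within {0..})"
        using contu s0 by (simp add: continuous_on_def)
      hence "(u \<longlongrightarrow> u s) (at_right s)"
        by (rule tendsto_within_subset) (use s0 in auto)
      hence "\<forall>\<^sub>F y in at_right s. u y < K" using True by (intro order_tendstoD)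
      thus ?thesis by eventually_elim simp
    next
      case False
      hence "u s = K" using usK by simp
      hence "u s > C0" unfolding K_def by simp
      hence "\<forall>\<^sub>F y in at_right s. u y < u s" using descent[OF s0] by blast
      thus ?thesis using \<open>u s = K\<close> by (simp add: eventually_mono less_imp_le)
    qed
    moreover have "\<forall>\<^sub>F y in at_right s. s < y \<and> y \<le> T"
      using sT' by (intro eventually_conj eventually_at_right_less) (auto simp: eventually_at_right_field intro: exI[of _ T])
    ultimately have "\<forall>\<^sub>F y in at_right s. False"
      by eventually_elim (use above in force)
    thus False by simp
  qed
  thus ?thesis unfolding u_def by blast
qed


lemma abs_bound_aux:
  fixes x g h :: "real \<Rightarrow> real" and \<gamma> L H :: real
  assumes gp: "\<gamma> > 0"
    and lipg: "L-lipschitz_on {0..} g"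
    and hb: "\<And>t. t \<ge> 0 \<Longrightarrow> \<bar>h t\<bar> \<le> H"
    and der: "\<And>t. t \<ge> 0 \<Longrightarrow> (x has_real_derivative (-\<gamma> * x t + g t + h t)) (at t within {0..})"
  shows "\<exists>C. \<forall>t\<ge>0. \<bar>x t - g t / \<gamma>\<bar> \<le> C"
proof -
  obtain C1 where C1: "\<forall>t\<ge>0. x t - g t / \<gamma> \<le> C1"
    using upper_bound_aux[OF gp lipg, of h H x] hb der by (meson abs_le_D1)
  have lipm: "L-lipschitz_on {0..} (\<lambda>t. - g t)"
    using lipschitz_on_cmult_real[OF lipg, of "-1"] by simp
  have derm: "((\<lambda>t. - x t) has_real_derivative (-\<gamma> * (- x t) + (- g t) + (- h t))) (at t within {0..})"
    if "t \<ge> 0" for t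
    using DERIV_minus[OF der[OF that]] by simp
  obtain C2 where C2: "\<forall>t\<ge>0. - x t - (- g t) / \<gamma> \<le> C2"
    using upper_bound_aux[OF gp lipm, of "\<lambda>t. - h t" H "\<lambda>t. - x t"] hb derm
    by (meson abs_le_D2)
  show ?thesis
    by (rule exI[of _ "max C1 C2"]) (use C1 C2 in \<open>auto simp: abs_le_iff\<close>)
qed

theorem lemma1:
  fixes r :: nat and \<gamma> :: "nat \<Rightarrow> real" and \<mu> :: "real \<Rightarrow> real"
    and \<phi> :: "real \<Rightarrow> nat \<Rightarrow> real"
  assumes gpos: "\<And>i. i < r \<Longrightarrow> \<gamma> i > 0"
    and lip: "\<exists>L. L-lipschitz_on {0..} \<mu>"
    and nonneg: "\<And>t. t \<ge> 0 \<Longrightarrow> \<mu> t \<ge> 0"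
    and ode: "\<And>t i. t \<ge> 0 \<Longrightarrow> i < r \<Longrightarrow>
      ((\<lambda>s. \<phi> s i) has_real_derivative
         ((\<Sum>j<r. A_gamma r \<gamma> i j * \<phi> t j) + B_vec r i * \<mu> t)) (at t within {0..})"
  shows "\<exists>C. \<forall>t\<ge>0. \<forall>i<r. \<bar>\<phi> t i - Gamma_vec r \<gamma> i * \<mu> t\<bar> \<le> C"
proof -
  obtain L where lipL: "L-lipschitz_on {0..} \<mu>" using lip by blast
  define P where "P i = (\<exists>C. \<forall>t\<ge>0. \<bar>\<phi> t i - Gamma_vec r \<gamma> i * \<mu> t\<bar> \<le> C)" for i
  define F where "F t i = (if Suc i < r then \<phi> t (Suc i) else \<mu> t)" for t i
  have sumA: "(\<Sum>j<r. A_gamma r \<gamma> i j * \<phi> t j) + B_vec r i * \<mu> t = - \<gamma> i * \<phi> t i + F t i"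
    if "i < r" for i t
  proof -
    have "(\<Sum>j<r. A_gamma r \<gamma> i j * \<phi> t j)
        = (\<Sum>j<r. (if j = i then - \<gamma> i * \<phi> t j else 0) + (if j = Suc i then \<phi> t j else 0))"
      by (rule sum.cong) (auto simp: A_gamma_def)
    also have "\<dots> = - \<gamma> i * \<phi> t i + (if Suc i < r then \<phi> t (Suc i) else 0)"
      using that by (simp add: sum.distrib)
    finally show ?thesis using that by (auto simp: F_def B_vec_def)
  qed
  have Gs: "Gamma_vec r \<gamma> i = Gamma_vec r \<gamma> (Suc i) / \<gamma> i" if "i < r" for i
    using that by (simp add: Gamma_vec_def prod.atLeast_Suc_lessThan)
  have Gr: "Gamma_vec r \<gamma> r = 1" by (simp add: Gamma_vec_def)
  have claim: "P i" if ir: "i < r" and hb: "\<forall>t\<ge>0. \<bar>F t i - Gamma_vec r \<gamma> (Suc i) * \<mu> t\<bar> \<le> H" for i H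
  proof -
    define g where "g t = Gamma_vec r \<gamma> (Suc i) * \<mu> t" for t
    have lg: "(\<bar>Gamma_vec r \<gamma> (Suc i)\<bar> * L)-lipschitz_on {0..} g"
      unfolding g_def by (rule lipschitz_on_cmult_real[OF lipL])
    have der: "((\<lambda>s. \<phi> s i) has_real_derivative (- \<gamma> i * \<phi> t i + g t + (F t i - g t))) (at t within {0..})"
      if "t \<ge> 0" for t
      using ode[OF that ir] sumA[OF ir, of t] by simp
    obtain C where C: "\<forall>t\<ge>0. \<bar>\<phi> t i - g t / \<gamma> i\<bar> \<le> C"
      using abs_bound_aux[OF gpos[OF ir] lg, of "\<lambda>t. F t i - g t" H "\<lambda>s. \<phi> s i"] der hb
      unfolding g_def by blast
    have "g t / \<gamma> i = Gamma_vec r \<gamma> i * \<mu> t" for t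
      unfolding g_def Gs[OF ir] by simp
    thus ?thesis unfolding P_def using C by metis
  qed
  have step: "\<forall>i. i < r \<longrightarrow> r - i = Suc n \<longrightarrow> P i" for n
  proof (induction n)
    case 0
    show ?case
    proof (intro allI impI)
      fix i assume "i < r" "r - i = Suc 0"
      hence "Suc i = r" by simp
      hence "\<forall>t\<ge>0. \<bar>F t i - Gamma_vec r \<gamma> (Suc i) * \<mu> t\<bar> \<le> 0"
        using Gr by (auto simp: F_def)
      thus "P i" using claim \<open>i < r\<close> by blast
    qed
  next
    case (Suc n)
    show ?case
    proof (intro allI impI)
      fix i assume ir: "i < r" and ri: "r - i = Suc (Suc n)"
      hence "Suc i < r" "r - Suc i = Suc n" by auto
      hence "P (Suc i)" using Suc.IH by blast
      then obtain H where "\<forall>t\<ge>0. \<bar>\<phi> t (Suc i) - Gamma_vec r \<gamma> (Suc i) * \<mu> t\<bar> \<le> H"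
        unfolding P_def by blast
      hence "\<forall>t\<ge>0. \<bar>F t i - Gamma_vec r \<gamma> (Suc i) * \<mu> t\<bar> \<le> H"
        using \<open>Suc i < r\<close> by (simp add: F_def)
      thus "P i" using claim ir by blast
    qed
  qed
  have "\<forall>i. \<exists>C. i < r \<longrightarrow> (\<forall>t\<ge>0. \<bar>\<phi> t i - Gamma_vec r \<gamma> i * \<mu> t\<bar> \<le> C)"
  proof
    fix i
    show "\<exists>C. i < r \<longrightarrow> (\<forall>t\<ge>0. \<bar>\<phi> t i - Gamma_vec r \<gamma> i * \<mu> t\<bar> \<le> C)"
    proof (cases "i < r")
      case True
      then obtain n where "r - i = Suc n" using less_imp_Suc_add by (metis Suc_diff_Suc zero_less_diff)
      hence "P i" using step True by blast
      thus ?thesis unfolding P_def by blast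
    qed auto
  qed
  then obtain Cf where Cf: "\<And>i t. i < r \<Longrightarrow> t \<ge> 0 \<Longrightarrow> \<bar>\<phi> t i - Gamma_vec r \<gamma> i * \<mu> t\<bar> \<le> Cf i"
    by metis
  show ?thesis
  proof (intro exI allI impI)
    fix t :: real and i :: nat assume t0: "t \<ge> 0" and ir: "i < r"
    have "Cf i \<le> \<bar>Cf i\<bar>" by simp
    also have "\<dots> \<le> (\<Sum>j<r. \<bar>Cf j\<bar>)"
      using ir by (intro member_le_sum) auto
    finally show "\<bar>\<phi> t i - Gamma_vec r \<gamma> i * \<mu> t\<bar> \<le> (\<Sum>j<r. \<bar>Cf j\<bar>)"
      using Cf[OF ir t0] by linarith
  qed
qed

end
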